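(* Let $\Pi$ be a set of $n$ processes and let $(\mathcal{G}^r)_{r\ge 1}$ be a sequence of communication graphs on $\Pi$. Let $r_1<r_2<\dots<r_n$ be $n$ distinct rounds such that each of $\mathcal{G}^{r_1},\dots,\mathcal{G}^{r_n}$ is rooted (the root components $\operatorname{Root}(\mathcal{G}^{r_i})$ need not coincide), and let $G=\{\mathcal{G}^{r_1},\dots,\mathcal{G}^{r_n}\}$. Let $X\subseteq\Pi$ satisfy $X\cap\operatorname{Root}(\mathcal{G}^{r_i})\neq\emptyset$ for every $i\in\{1,\dots,n\}$. Then for every $p\in\Pi$ there exist $q\in X$ and $i\in\{1,\dots,n\}$ such that $q\in\operatorname{Root}(\mathcal{G}^{r_i})$ and $q\in \mathrm{CP}_p(r_i,r_n)$.
   Context: A communication graph on the process set $\Pi$ is a directed graph with vertex set $\Pi$ containing every self-loop $(p\to p)$. A root component of a graph $\mathcal{G}$ is a nonempty set $R\subseteq\Pi$ that is the vertex set of a strongly connected component of $\mathcal{G}$ such that whenever $(p\to q)\in\mathcal{G}$ with $q\in R$, also $p\in R$. A graph is rooted if it has exactly one root component, denoted $\operatorname{Root}(\mathcal{G})$. For two graphs $\mathcal{G},\mathcal{G}'$ on the same vertex set $V$, the compound graph $\mathcal{G}\circ\mathcal{G}'$ has edge $(p,q)$ iff there is $p'\in V$ with $(p,p')\in\mathcal{G}$ and $(p',q)\in\mathcal{G}'$. For rounds $a\le b$, the causal past of $p$ is $\mathrm{CP}_p(a,b)=\{p\}$ if $a=b$, and $\mathrm{CP}_p(a,b)=\{q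 : (q,p)\in \mathcal{G}^{a+1}\circ\cdots\circ\mathcal{G}^{b}\}$ if $a<b$. *)

theory Defs
  imports Main
begin

definition comm_graph :: "'a set \<Rightarrow> ('a \<times> 'a) set \<Rightarrow> bool" where
  "comm_graph P E \<longleftrightarrow> E \<subseteq> P \<times> P \<and> (\<forall>p\<in>P. (p, p) \<in> E)"

definition is_scc :: "'a set \<Rightarrow> ('a \<times> 'a) set \<Rightarrow> 'a set \<Rightarrow> bool" where
  "is_scc P E R \<longleftrightarrow> R \<noteq> {} \<and> R \<subseteq> P \<and>
     (\<forall>u\<in>R. \<forall>v\<in>P. v \<in> R \<longleftrightarrow> ((u, v) \<in> E\<^sup>* \<and> (v, u) \<in> E\<^sup>*))"

definition root_component :: "'a set \<Rightarrow> ('a \<times> 'a) set \<Rightarrow> 'a set \<Rightarrow> bool" where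
  "root_component P E R \<longleftrightarrow> is_scc P E R \<and> (\<forall>p q. (p, q) \<in> E \<and> q \<in> R \<longrightarrow> p \<in> R)"

definition rooted :: "'a set \<Rightarrow> ('a \<times> 'a) set \<Rightarrow> bool" where
  "rooted P E \<longleftrightarrow> (\<exists>!R. root_component P E R)"

definition Root :: "'a set \<Rightarrow> ('a \<times> 'a) set \<Rightarrow> 'a set" where
  "Root P E = (THE R. root_component P E R)"

text \<open>compound Gs a k = G^(a+1) o ... o G^(a+k)  (identity for k = 0).\<close>
fun compound :: "(nat \<Rightarrow> ('a \<times> 'a) set) \<Rightarrow> nat \<Rightarrow> nat \<Rightarrow> ('a \<times> 'a) set" where
  "compound Gs a 0 = Id"
| "compound Gs a (Suc k) = compound Gs a k O Gs (a + Suc k)"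

definition CP :: "(nat \<Rightarrow> ('a \<times> 'a) set) \<Rightarrow> 'a \<Rightarrow> nat \<Rightarrow> nat \<Rightarrow> 'a set" where
  "CP Gs p a b = (if a = b then {p} else {q. (q, p) \<in> compound Gs a (b - a)})"

end

theory Submission
  imports Defs
begin

lemma key:
  assumes fin: "finite P" and cg: "comm_graph P E" and ro: "rooted P E"
    and SP: "S \<subseteq> P" and xS: "x \<in> S"
    and cl: "\<forall>a b. (a,b)\<in>E \<and> b\<in>S \<longrightarrow> a\<in>S"
  shows "Root P E \<subseteq> S"
proof -
  define A where "A z = {w. (w,z)\<in>E\<^sup>*}" for z
  have EP: "E \<subseteq> P \<times> P" using cg by (simp add: comm_graph_def)
  have AP: "A z \<subseteq> P" if "z \<in> P" for z
  proof
    fix w assume "w \<in> A z"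
    hence "(w,z)\<in>E\<^sup>*" by (simp add: A_def)
    thus "w \<in> P" using that EP by (induction rule: converse_rtrancl_induct) auto
  qed
  have AS: "A x \<subseteq> S"
  proof
    fix w assume "w \<in> A x"
    hence "(w,x)\<in>E\<^sup>*" by (simp add: A_def)
    thus "w \<in> S" using xS cl by (induction rule: converse_rtrancl_induct) auto
  qed
  have "x \<in> A x" by (simp add: A_def)
  then obtain y where yA: "y \<in> A x" and mn: "\<forall>z. z \<in> A x \<longrightarrow> card (A y) \<le> card (A z)"
    using ex_has_least_nat[of "\<lambda>z. z \<in> A x" x "\<lambda>z. card (A z)"] by blast
  have yP: "y \<in> P" using yA AS SP by blast
  define R where "R = A y"
  have eq: "A z = A y" if "z \<in> R" for z
  proof -
    have zy: "(z,y)\<in>E\<^sup>*" using that by (simp add: R_def A_def)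
    have sub: "A z \<subseteq> A y" using zy by (auto simp: A_def)
    have "z \<in> A x" using zy yA by (auto simp: A_def)
    hence "card (A y) \<le> card (A z)" using mn by blast
    moreover have "finite (A y)" using AP[OF yP] fin finite_subset by blast
    ultimately show ?thesis using sub card_seteq by blast
  qed
  have rc: "root_component P E R"
    unfolding root_component_def is_scc_def
  proof (intro conjI ballI allI impI)
    show "R \<noteq> {}" by (auto simp: R_def A_def)
    show "R \<subseteq> P" using AP[OF yP] R_def by simp
  next
    fix u v assume uR: "u \<in> R" and vP: "v \<in> P"
    show "(v \<in> R) = ((u, v) \<in> E\<^sup>* \<and> (v, u) \<in> E\<^sup>*)"
    proof
      assume vR: "v \<in> R"
      have "u \<in> A v" using eq[OF vR] uR R_def by simp
      moreover have "v \<in> A u" using eq[OF uR] vR R_def by simp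
      ultimately show "(u, v) \<in> E\<^sup>* \<and> (v, u) \<in> E\<^sup>*" by (simp add: A_def)
    next
      assume "(u, v) \<in> E\<^sup>* \<and> (v, u) \<in> E\<^sup>*"
      hence "v \<in> A u" by (simp add: A_def)
      thus "v \<in> R" using eq[OF uR] R_def by simp
    qed
  next
    fix a b assume "(a, b) \<in> E \<and> b \<in> R"
    thus "a \<in> R" by (auto simp: R_def A_def intro: converse_rtrancl_into_rtrancl)
  qed
  have "Root P E = R" unfolding Root_def
    using ro rc unfolding rooted_def by (metis the1_equality)
  moreover have "R \<subseteq> A x" using yA by (auto simp: R_def A_def)
  ultimately show ?thesis using AS by blast
qed

lemma compound_P:
  assumes "\<forall>k\<ge>1. comm_graph P (Gs k)"
  shows "p \<in> P \<Longrightarrow> (q,p) \<in> compound Gs a k \<Longrightarrow> q \<in> P"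
proof (induction k arbitrary: p)
  case 0 thus ?case by simp
next
  case (Suc k)
  then obtain z where "(q,z) \<in> compound Gs a k" "(z,p) \<in> Gs (a + Suc k)" by auto
  moreover have "comm_graph P (Gs (a + Suc k))" using assms by simp
  ultimately show ?case using Suc.IH by (auto simp: comm_graph_def)
qed

lemma compound_refl:
  assumes "\<forall>k\<ge>1. comm_graph P (Gs k)" and "q \<in> P"
  shows "(q,q) \<in> compound Gs a k"
proof (induction k)
  case 0 thus ?case by simp
next
  case (Suc k)
  have "comm_graph P (Gs (a + Suc k))" using assms by simp
  hence "(q,q) \<in> Gs (a + Suc k)" using assms(2) by (simp add: comm_graph_def)
  thus ?case using Suc by auto
qed

lemma compound_split:
  "compound Gs a (k + m) = compound Gs a k O compound Gs (a + k) m"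
  by (induction m) (auto simp: add.assoc)

theorem lemma1:
  fixes P :: "'a set" and n :: nat and Gs :: "nat \<Rightarrow> ('a \<times> 'a) set"
    and r :: "nat \<Rightarrow> nat" and X :: "'a set"
  assumes "finite P" and "card P = n"
    and "\<forall>k\<ge>1. comm_graph P (Gs k)"
    and "\<forall>i\<in>{1..n}. r i \<ge> 1"
    and "\<forall>i\<in>{1..n}. \<forall>j\<in>{1..n}. i < j \<longrightarrow> r i < r j"
    and "\<forall>i\<in>{1..n}. rooted P (Gs (r i))"
    and "X \<subseteq> P"
    and "\<forall>i\<in>{1..n}. X \<inter> Root P (Gs (r i)) \<noteq> {}"
  shows "\<forall>p\<in>P. \<exists>q\<in>X. \<exists>i\<in>{1..n}. q \<in> Root P (Gs (r i)) \<and> q \<in> CP Gs p (r i) (r n)"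
proof
  fix p assume pP: "p \<in> P"
  note cg = assms(3)
  have rlt: "r i < r j" if "i \<in> {1..n}" "j \<in> {1..n}" "i < j" for i j
    using assms(5) that by blast
  define D where "D a = {q. (q,p) \<in> compound Gs a (r n - a)}" for a
  have rle: "r i \<le> r n" if "i \<in> {1..n}" for i
  proof (cases "i = n")
    case True thus ?thesis by simp
  next
    case False
    hence "i < n" "n \<in> {1..n}" using that by auto
    thus ?thesis using rlt[OF that] by fastforce
  qed
  have CPD: "CP Gs p (r i) (r n) = D (r i)" if "i \<in> {1..n}" for i
  proof (cases "r i = r n")
    case True thus ?thesis by (simp add: CP_def D_def)
  next
    case False thus ?thesis by (simp add: CP_def D_def)
  qed
  have DP: "D a \<subseteq> P" for a
  proof
    fix q assume "q \<in> D a"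
    thus "q \<in> P" using compound_P[OF cg pP] by (simp add: D_def)
  qed
  have pD: "p \<in> D a" for a using compound_refl[OF cg pP] by (simp add: D_def)
  have finD: "finite (D a)" for a using DP assms(1) finite_subset by blast
  have rootsub: "Root P (Gs (r i)) \<subseteq> P" if "i \<in> {1..n}" for i
  proof -
    have "rooted P (Gs (r i))" using assms(6) that by blast
    hence "\<exists>!R. root_component P (Gs (r i)) R" by (simp add: rooted_def)
    hence "root_component P (Gs (r i)) (Root P (Gs (r i)))"
      unfolding Root_def by (rule theI')
    thus ?thesis by (simp add: root_component_def is_scc_def)
  qed
  show "\<exists>q\<in>X. \<exists>i\<in>{1..n}. q \<in> Root P (Gs (r i)) \<and> q \<in> CP Gs p (r i) (r n)"
  proof (rule ccontr)
    assume nq: "\<not> ?thesis"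
    have nsub: "\<not> Root P (Gs (r i)) \<subseteq> D (r i)" if "i \<in> {1..n}" for i
    proof
      assume sub: "Root P (Gs (r i)) \<subseteq> D (r i)"
      have ne: "X \<inter> Root P (Gs (r i)) \<noteq> {}" using assms(8) that by simp
      then obtain q where "q \<in> X \<inter> Root P (Gs (r i))" by (meson ex_in_conv)
      hence q: "q \<in> X" "q \<in> Root P (Gs (r i))" by simp_all
      have "q \<in> CP Gs p (r i) (r n)" using q(2) sub CPD[OF that] by blast
      thus False using nq q that by blast
    qed
    have step: "D (r (i+1)) \<subset> D (r i)" if "1 \<le> i" "i < n" for i
    proof -
      have i1: "i+1 \<in> {1..n}" using that by auto
      have ii: "i \<in> {1..n}" using that by auto
      have lt: "r i < r (i+1)" using rlt[OF ii i1] by simp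
      have le2: "r (i+1) \<le> r n" using rle[OF i1] .
      have ge1: "r (i+1) \<ge> 1" using lt by simp
      have cgi: "comm_graph P (Gs (r (i+1)))" using cg ge1 by blast
      have ro: "rooted P (Gs (r (i+1)))" using assms(6) i1 by blast
      have "\<not> (\<forall>a b. (a,b)\<in>Gs (r (i+1)) \<and> b\<in>D (r (i+1)) \<longrightarrow> a\<in>D (r (i+1)))"
        using key[OF assms(1) cgi ro DP pD] nsub[OF i1] by blast
      then obtain x y where xy: "(x,y) \<in> Gs (r (i+1))" "y \<in> D (r (i+1))" "x \<notin> D (r (i+1))"
        by blast
      have xP: "x \<in> P" using cgi xy(1) by (auto simp: comm_graph_def)
      obtain k where k: "r (i+1) - r i = Suc k" using lt by (cases "r (i+1) - r i") auto
      have "r i + Suc k = r (i+1)" using k lt by simp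
      hence "(x,y) \<in> compound Gs (r i) (Suc k)"
        using compound_refl[OF cg xP, of "r i" k] xy(1) by auto
      hence xyc: "(x,y) \<in> compound Gs (r i) (r (i+1) - r i)" using k by simp
      have sp: "r n - r i = (r (i+1) - r i) + (r n - r (i+1))" using lt le2 by simp
      have "r i + (r (i+1) - r i) = r (i+1)" using lt by simp
      hence ceq: "compound Gs (r i) (r n - r i) = compound Gs (r i) (r (i+1) - r i) O compound Gs (r (i+1)) (r n - r (i+1))"
        using compound_split[of Gs "r i" "r (i+1) - r i" "r n - r (i+1)"] sp by simp
      have xD: "x \<in> D (r i)" using xyc xy(2) ceq unfolding D_def by auto
      have "D (r (i+1)) \<subseteq> D (r i)"
      proof
        fix q assume q: "q \<in> D (r (i+1))"
        have "q \<in> P" using q DP by blast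
        hence "(q,q) \<in> compound Gs (r i) (r (i+1) - r i)" using compound_refl[OF cg] by blast
        thus "q \<in> D (r i)" using q ceq unfolding D_def by auto
      qed
      thus ?thesis using xD xy(3) by blast
    qed
    have cnt: "m < n \<longrightarrow> m + 1 \<le> card (D (r (n - m)))" for m
    proof (induction m)
      case 0
      have "card (D (r n)) > 0" using pD finD card_gt_0_iff by blast
      thus ?case by simp
    next
      case (Suc m)
      show ?case
      proof
        assume sm: "Suc m < n"
        have e: "n - Suc m + 1 = n - m" using sm by simp
        have "D (r (n - Suc m + 1)) \<subset> D (r (n - Suc m))" using step[of "n - Suc m"] sm by simp
        hence "D (r (n - m)) \<subset> D (r (n - Suc m))" using e by simp
        hence "card (D (r (n - m))) < card (D (r (n - Suc m)))" using finD psubset_card_mono by blast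
        thus "Suc m + 1 \<le> card (D (r (n - Suc m)))" using Suc sm by simp
      qed
    qed
    show False
    proof (cases "n = 0")
      case True thus False using assms(1,2) pP by simp
    next
      case False
      hence one: "1 \<in> {1..n}" by simp
      have "n \<le> card (D (r 1))" using cnt[of "n - 1"] False by simp
      hence "D (r 1) = P" using DP assms(1,2) card_seteq by blast
      thus False using nsub[OF one] rootsub[OF one] by simp
    qed
  qed
qed

end
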